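(* Let $A,B,C$ be finite-dimensional quantum systems and let $\Lambda^{C\to B}$ be a quantum channel (completely positive trace-preserving linear map). (i) If $\Lambda^{C\to AB}$ is an incoherent extension of $\Lambda^{C\to B}$, then for every measurement assemblage $\{M^A_{a|x}\}_{a,x}$ on $A$ the induced channel assemblage $\{\Lambda^{C\to B}_{a|x}\}_{a,x}$, defined by $\Lambda^{C\to B}_{a|x}[X]=\mathrm{Tr}_A\big(M^A_{a|x}\,\Lambda^{C\to AB}[X]\big)$, is unsteerable. (ii) Conversely, for every unsteerable channel assemblage $\{\Lambda_{a|x}\}_{a,x}$ for $\Lambda^{C\to B}$ there exist a system $A$, an incoherent extension $\Lambda^{C\to AB}$ of $\Lambda^{C\to B}$ and a measurement assemblage $\{M^A_{a|x}\}_{a,x}$ on $A$ such that $\Lambda_{a|x}[X]=\mathrm{Tr}_A\big(M^A_{a|x}\,\Lambda^{C\to AB}[X]\big)$ for all $a,x$ and all operators $X$ on $C$.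
   Context: A channel extension of $\Lambda^{C\to B}$ is a channel $\Lambda^{C\to AB}$ with $\mathrm{Tr}_A\circ\Lambda^{C\to AB}=\Lambda^{C\to B}$. An instrument is a collection $\{\Lambda_\lambda\}_\lambda$ of completely positive maps whose sum is a channel (each $\Lambda_\lambda$ is then a completely positive trace-non-increasing map, a subchannel). A channel extension $\Lambda^{C\to AB}$ of $\Lambda^{C\to B}$ is incoherent if there exist an instrument $\{\Lambda^{C\to B}_\lambda\}_\lambda$ (necessarily summing to $\Lambda^{C\to B}$) and unit-trace density operators $\{\sigma^A_\lambda\}_\lambda$ on $A$ such that $\Lambda^{C\to AB}=\sum_\lambda \Lambda^{C\to B}_\lambda\otimes\sigma^A_\lambda$, i.e. $\Lambda^{C\to AB}[X]=\sum_\lambda \Lambda^{C\to B}_\lambda[X]\otimes\sigma^A_\lambda$. A measurement assemblage on $A$ is a collection $\{M^A_{a|x}\}_{a,x}$ such that for each $x$, $\{M^A_{a|x}\}_a$ is a POVM ($M^A_{a|x}\ge 0$, $\sum_a M^A_{a|x}=\mathbb{1}$). A channel assemblage for $\Lambda^{C\to B}$ is a collection $\{\Lambda_{a|x}\}_{a,x}$ of completely positive maps $C\to B$ such that $\sum_a\Lambda_{a|x}=\Lambda^{C\to B}$ for every $x$. It is unsteerable if there exist an instrument $\{\Lambda_\lambda\}_\lambda$ and conditional probability distributions $p(a|x,\lambda)$ with $\Lambda_{a|x}=\sum_\lambda p(a|x,\lambda)\Lambda_\lambda$ for all $a,x$. *)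

theory Defs
  imports "Jordan_Normal_Form.Matrix"
begin

text \<open>Maps between operator spaces are HOL functions on
  complex matrices; only their behaviour on the relevant carrier matters.
  Composite system AB has dimension dA * dB, with the Kronecker ordering
  (A first).\<close>

definition mtrace :: "complex mat \<Rightarrow> complex" where
  "mtrace M = (\<Sum>i<dim_row M. M $$ (i, i))"

definition psd :: "nat \<Rightarrow> complex mat \<Rightarrow> bool" where
  "psd d M \<longleftrightarrow> M \<in> carrier_mat d d \<and>
     (\<forall>v :: nat \<Rightarrow> complex.
        let q = (\<Sum>i<d. \<Sum>j<d. cnj (v i) * M $$ (i, j) * v j) in Im q = 0 \<and> Re q \<ge> 0)"

definition density :: "nat \<Rightarrow> complex mat \<Rightarrow> bool" where
  "density d M \<longleftrightarrow> psd d M \<and> mtrace M = 1"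

definition tensor_mat :: "complex mat \<Rightarrow> complex mat \<Rightarrow> complex mat" where
  "tensor_mat P Q = mat (dim_row P * dim_row Q) (dim_col P * dim_col Q)
     (\<lambda>(i, j). P $$ (i div dim_row Q, j div dim_col Q) * Q $$ (i mod dim_row Q, j mod dim_col Q))"

definition ptrace_A :: "nat \<Rightarrow> nat \<Rightarrow> complex mat \<Rightarrow> complex mat" where
  "ptrace_A dA dB Y = mat dB dB (\<lambda>(i, j). \<Sum>k<dA. Y $$ (k * dB + i, k * dB + j))"

definition msum :: "nat \<Rightarrow> ('l \<Rightarrow> complex mat) \<Rightarrow> 'l set \<Rightarrow> complex mat" where
  "msum d f L = mat d d (\<lambda>(i, j). \<Sum>l\<in>L. f l $$ (i, j))"

definition lin_map :: "nat \<Rightarrow> nat \<Rightarrow> (complex mat \<Rightarrow> complex mat) \<Rightarrow> bool" where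
  "lin_map dC dB \<Phi> \<longleftrightarrow>
     (\<forall>X \<in> carrier_mat dC dC. \<Phi> X \<in> carrier_mat dB dB) \<and>
     (\<forall>X \<in> carrier_mat dC dC. \<forall>Y \<in> carrier_mat dC dC. \<Phi> (X + Y) = \<Phi> X + \<Phi> Y) \<and>
     (\<forall>c. \<forall>X \<in> carrier_mat dC dC. \<Phi> (c \<cdot>\<^sub>m X) = c \<cdot>\<^sub>m \<Phi> X)"

text \<open>(id_n \<otimes> \<Phi>) applied to an operator on (n-dim ancilla) \<otimes> C, blockwise.\<close>
definition id_tensor :: "nat \<Rightarrow> nat \<Rightarrow> nat \<Rightarrow> (complex mat \<Rightarrow> complex mat) \<Rightarrow> complex mat \<Rightarrow> complex mat" where
  "id_tensor n dC dB \<Phi> M = mat (n * dB) (n * dB)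
     (\<lambda>(i, j). \<Phi> (mat dC dC (\<lambda>(p, q). M $$ ((i div dB) * dC + p, (j div dB) * dC + q)))
               $$ (i mod dB, j mod dB))"

definition cp_map :: "nat \<Rightarrow> nat \<Rightarrow> (complex mat \<Rightarrow> complex mat) \<Rightarrow> bool" where
  "cp_map dC dB \<Phi> \<longleftrightarrow> lin_map dC dB \<Phi> \<and>
     (\<forall>n M. psd (n * dC) M \<longrightarrow> psd (n * dB) (id_tensor n dC dB \<Phi> M))"

definition channel :: "nat \<Rightarrow> nat \<Rightarrow> (complex mat \<Rightarrow> complex mat) \<Rightarrow> bool" where
  "channel dC dB \<Phi> \<longleftrightarrow> cp_map dC dB \<Phi> \<and>
     (\<forall>X \<in> carrier_mat dC dC. mtrace (\<Phi> X) = mtrace X)"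

definition instrument :: "nat \<Rightarrow> nat \<Rightarrow> 'l set \<Rightarrow> ('l \<Rightarrow> complex mat \<Rightarrow> complex mat) \<Rightarrow> bool" where
  "instrument dC dB L \<Phi>s \<longleftrightarrow> finite L \<and> (\<forall>l\<in>L. cp_map dC dB (\<Phi>s l)) \<and>
     channel dC dB (\<lambda>X. msum dB (\<lambda>l. \<Phi>s l X) L)"

definition channel_extension :: "nat \<Rightarrow> nat \<Rightarrow> nat \<Rightarrow> (complex mat \<Rightarrow> complex mat)
    \<Rightarrow> (complex mat \<Rightarrow> complex mat) \<Rightarrow> bool" where
  "channel_extension dA dB dC Ext \<Lambda> \<longleftrightarrow> channel dC (dA * dB) Ext \<and>
     (\<forall>X \<in> carrier_mat dC dC. ptrace_A dA dB (Ext X) = \<Lambda> X)"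

definition incoherent_extension :: "nat \<Rightarrow> nat \<Rightarrow> nat \<Rightarrow> (complex mat \<Rightarrow> complex mat)
    \<Rightarrow> (complex mat \<Rightarrow> complex mat) \<Rightarrow> bool" where
  "incoherent_extension dA dB dC Ext \<Lambda> \<longleftrightarrow> channel_extension dA dB dC Ext \<Lambda> \<and>
     (\<exists>(L :: nat set) \<Phi>s \<sigma>. instrument dC dB L \<Phi>s \<and> (\<forall>l\<in>L. density dA (\<sigma> l)) \<and>
        (\<forall>X \<in> carrier_mat dC dC. Ext X = msum (dA * dB) (\<lambda>l. tensor_mat (\<sigma> l) (\<Phi>s l X)) L))"

definition meas_assemblage :: "nat \<Rightarrow> 'o set \<Rightarrow> 'i set \<Rightarrow> ('o \<Rightarrow> 'i \<Rightarrow> complex mat) \<Rightarrow> bool" where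
  "meas_assemblage dA Out Ins M \<longleftrightarrow> finite Out \<and>
     (\<forall>x\<in>Ins. (\<forall>a\<in>Out. psd dA (M a x)) \<and> msum dA (\<lambda>a. M a x) Out = 1\<^sub>m dA)"

definition channel_assemblage :: "nat \<Rightarrow> nat \<Rightarrow> (complex mat \<Rightarrow> complex mat) \<Rightarrow> 'o set \<Rightarrow> 'i set
    \<Rightarrow> ('o \<Rightarrow> 'i \<Rightarrow> complex mat \<Rightarrow> complex mat) \<Rightarrow> bool" where
  "channel_assemblage dC dB \<Lambda> Out Ins Lam \<longleftrightarrow> finite Out \<and>
     (\<forall>x\<in>Ins. (\<forall>a\<in>Out. cp_map dC dB (Lam a x)) \<and>
        (\<forall>X \<in> carrier_mat dC dC. msum dB (\<lambda>a. Lam a x X) Out = \<Lambda> X))"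

definition unsteerable :: "nat \<Rightarrow> nat \<Rightarrow> 'o set \<Rightarrow> 'i set
    \<Rightarrow> ('o \<Rightarrow> 'i \<Rightarrow> complex mat \<Rightarrow> complex mat) \<Rightarrow> bool" where
  "unsteerable dC dB Out Ins Lam \<longleftrightarrow>
     (\<exists>(L :: nat set) \<Phi>s (p :: 'o \<Rightarrow> 'i \<Rightarrow> nat \<Rightarrow> real). instrument dC dB L \<Phi>s \<and>
        (\<forall>x\<in>Ins. \<forall>l\<in>L. (\<forall>a\<in>Out. p a x l \<ge> 0) \<and> (\<Sum>a\<in>Out. p a x l) = 1) \<and>
        (\<forall>a\<in>Out. \<forall>x\<in>Ins. \<forall>X \<in> carrier_mat dC dC.
            Lam a x X = msum dB (\<lambda>l. complex_of_real (p a x l) \<cdot>\<^sub>m \<Phi>s l X) L))"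

definition induced :: "nat \<Rightarrow> nat \<Rightarrow> (complex mat \<Rightarrow> complex mat) \<Rightarrow> ('o \<Rightarrow> 'i \<Rightarrow> complex mat)
    \<Rightarrow> 'o \<Rightarrow> 'i \<Rightarrow> complex mat \<Rightarrow> complex mat" where
  "induced dA dB Ext M a x X = ptrace_A dA dB (tensor_mat (M a x) (1\<^sub>m dB) * Ext X)"

end

theory Submission
  imports Defs
begin

definition qf :: "nat \<Rightarrow> complex mat \<Rightarrow> (nat \<Rightarrow> complex) \<Rightarrow> complex" where
  "qf d M v = (\<Sum>i<d. \<Sum>j<d. cnj (v i) * M $$ (i, j) * v j)"

lemma psd_iff: "psd d M \<longleftrightarrow> M \<in> carrier_mat d d \<and> (\<forall>v. Im (qf d M v) = 0 \<and> Re (qf d M v) \<ge> 0)"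
  unfolding psd_def qf_def Let_def by simp

lemma psdD: "psd d M \<Longrightarrow> Im (qf d M v) = 0" "psd d M \<Longrightarrow> Re (qf d M v) \<ge> 0"
  "psd d M \<Longrightarrow> M \<in> carrier_mat d d"
  by (auto simp: psd_iff)

lemma qf_support:
  assumes "\<And>t. t \<notin> S \<Longrightarrow> v t = 0" "S \<subseteq> {..<d}"
  shows "qf d M v = (\<Sum>i\<in>S. \<Sum>j\<in>S. cnj (v i) * M $$ (i, j) * v j)"
proof -
  have fin: "finite S" using assms(2) finite_subset by blast
  have "qf d M v = (\<Sum>i<d. \<Sum>j\<in>S. cnj (v i) * M $$ (i, j) * v j)"
    unfolding qf_def
  proof (rule sum.cong[OF refl])
    fix i show "(\<Sum>j<d. cnj (v i) * M $$ (i, j) * v j) = (\<Sum>j\<in>S. cnj (v i) * M $$ (i, j) * v j)"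
      by (rule sum.mono_neutral_right) (use assms fin in auto)
  qed
  also have "\<dots> = (\<Sum>i\<in>S. \<Sum>j\<in>S. cnj (v i) * M $$ (i, j) * v j)"
    by (rule sum.mono_neutral_right) (use assms fin in auto)
  finally show ?thesis .
qed

lemma qf_one: assumes "i < d" shows "qf d M (\<lambda>t. if t = i then 1 else 0) = M $$ (i,i)"
  by (subst qf_support[of "{i}"]) (use assms in auto)

lemma qf_two: assumes "i < d" "j < d" "i \<noteq> j"
  shows "qf d M (\<lambda>t. if t = i then a else if t = j then b else 0) =
     cnj a * M $$ (i,i) * a + cnj a * M $$ (i,j) * b + cnj b * M $$ (j,i) * a + cnj b * M $$ (j,j) * b"
  by (subst qf_support[of "{i,j}"]) (use assms in auto)

lemma psd_diag: assumes "psd d M" "i < d" shows "Im (M $$ (i,i)) = 0" "Re (M $$ (i,i)) \<ge> 0"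
  using psdD(1,2)[OF assms(1), of "\<lambda>t. if t = i then 1 else 0"] qf_one[OF assms(2)] by auto

lemma psd_herm: assumes "psd d M" "i < d" "j < d" shows "M $$ (j,i) = cnj (M $$ (i,j))"
proof (cases "i = j")
  case True thus ?thesis using psd_diag[OF assms(1,2)] by (simp add: complex_eq_iff)
next
  case False
  have 1: "Im (qf d M (\<lambda>t. if t = i then 1 else if t = j then 1 else 0)) = 0" using psdD(1)[OF assms(1)] .
  have 2: "Im (qf d M (\<lambda>t. if t = i then 1 else if t = j then \<i> else 0)) = 0" using psdD(1)[OF assms(1)] .
  have di: "Im (M $$ (i,i)) = 0" and dj: "Im (M $$ (j,j)) = 0" using psd_diag assms by auto
  from 1 2 di dj show ?thesis unfolding qf_two[OF assms(2,3) False]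
    by (simp add: complex_eq_iff algebra_simps)
qed


lemma psd_row_zero: assumes "psd d M" "k < d" "j < d" "M $$ (k,k) = 0" shows "M $$ (k,j) = 0"
proof (rule ccontr)
  assume nz: "M $$ (k,j) \<noteq> 0"
  hence kj: "k \<noteq> j" using assms by auto
  define z where "z = M $$ (k,j)"
  define s :: real where "s = (Re (M $$ (j,j)) + 1) / (2 * (cmod z)^2)"
  have zpos: "cmod z > 0" using nz z_def by auto
  define a where "a = - of_real s * z"
  have h: "M $$ (j,k) = cnj z" using psd_herm[OF assms(1,2,3)] z_def by simp
  have "qf d M (\<lambda>t. if t = k then a else if t = j then 1 else 0) = 
      cnj a * z + cnj z * a + M $$ (j,j)"
    unfolding qf_two[OF assms(2,3) kj] using assms(4) h z_def by simp
  also have "\<dots> = M $$ (j,j) - of_real (2 * s) * (cnj z * z)"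
    unfolding a_def by (simp add: algebra_simps)
  also have "cnj z * z = of_real ((cmod z)^2)" by (metis complex_norm_square mult.commute)
  also have "M $$ (j,j) - of_real (2 * s) * of_real ((cmod z)^2) = M $$ (j,j) - of_real (2 * s * (cmod z)^2)"
    by simp
  finally have "Re (qf d M (\<lambda>t. if t = k then a else if t = j then 1 else 0)) = Re (M $$ (j,j)) - 2 * s * (cmod z)^2"
    by simp
  also have "\<dots> = -1" unfolding s_def using zpos by (simp add: field_simps)
  finally show False using psdD(2)[OF assms(1)] by (metis neg_0_le_iff_le not_one_le_zero)
qed

lemma sum_ifR: "(k::nat) < d \<Longrightarrow> (\<Sum>j<d. f j * (if j = k then t else 0)) = f k * (t::'a::comm_ring_1)"
proof -
  assume k: "k < d"
  have "(\<Sum>j<d. f j * (if j = k then t else 0)) = (\<Sum>j<d. if j = k then f j * t else 0)"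
    by (intro sum.cong) auto
  thus ?thesis using k by (simp add: sum.delta)
qed

lemma sum_ifL: "(k::nat) < d \<Longrightarrow> (\<Sum>j<d. (if j = k then t else 0) * f j) = t * (f k::'a::comm_ring_1)"
  using sum_ifR[of k d f t] by (simp add: mult.commute)

lemma qf_shift: assumes "k < d"
  shows "qf d M (\<lambda>i. v i + (if i = k then t else 0)) = qf d M v + cnj t * (\<Sum>j<d. M$$(k,j) * v j)
     + t * (\<Sum>i<d. cnj (v i) * M$$(i,k)) + cnj t * M$$(k,k) * t"
proof -
  have "qf d M (\<lambda>i. v i + (if i = k then t else 0)) =
     (\<Sum>i<d. \<Sum>j<d. cnj (v i) * M $$ (i, j) * v j) + (\<Sum>i<d. \<Sum>j<d. (cnj (v i) * M $$ (i, j)) * (if j = k then t else 0))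
       + (\<Sum>i<d. (if i = k then cnj t else 0) * (\<Sum>j<d. M $$ (i, j) * v j)) + (\<Sum>i<d. (if i = k then cnj t else 0) * (\<Sum>j<d. M $$ (i, j) * (if j = k then t else 0)))"
    unfolding qf_def sum_distrib_left sum.distrib[symmetric] by (intro sum.cong refl) (auto simp: algebra_simps)
  also have "\<dots> = qf d M v + (\<Sum>i<d. cnj (v i) * M$$(i,k) * t) + cnj t * (\<Sum>j<d. M$$(k,j) * v j) + cnj t * (M$$(k,k) * t)"
    unfolding qf_def using assms by (simp only: sum_ifR sum_ifL)
  finally show ?thesis by (simp add: algebra_simps sum_distrib_left)
qed


lemma chol_step_psd:
  assumes B: "psd d B" and k: "k < d" and b: "B $$ (k,k) \<noteq> 0"
  defines "B' \<equiv> mat d d (\<lambda>(i,j). B$$(i,j) - B$$(i,k) * B$$(k,j) / B$$(k,k))"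
  shows "psd d B'"
proof -
  let ?\<beta> = "B $$ (k,k)"
  have \<beta>r: "cnj ?\<beta> = ?\<beta>" using psd_diag(1)[OF B k] by (simp add: complex_eq_iff)
  have "Im (qf d B' v) = 0 \<and> Re (qf d B' v) \<ge> 0" for v
  proof -
    define s where "s = (\<Sum>j<d. B$$(k,j) * v j)"
    define t where "t = - s / ?\<beta>"
    have s': "(\<Sum>i<d. cnj (v i) * B$$(i,k)) = cnj s"
      unfolding s_def cnj_sum using psd_herm[OF B k] by (intro sum.cong) (auto simp: mult.commute)
    have "qf d B' v = (\<Sum>i<d. \<Sum>j<d. cnj (v i) * B $$ (i, j) * v j - (cnj (v i) * B$$(i,k)) * (B$$(k,j) * v j) / ?\<beta>)"
      unfolding qf_def B'_def by (intro sum.cong refl) (auto simp: algebra_simps)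
    also have "\<dots> = qf d B v - (\<Sum>i<d. cnj (v i) * B$$(i,k)) * (\<Sum>j<d. B$$(k,j) * v j) / ?\<beta>"
      unfolding qf_def sum_subtractf sum_divide_distrib sum_product by simp
    also have "\<dots> = qf d B v - cnj s * s / ?\<beta>" unfolding s' s_def ..
    also have "\<dots> = qf d B (\<lambda>i. v i + (if i = k then t else 0))"
      unfolding qf_shift[OF k] s_def[symmetric] s' t_def using b \<beta>r
      by (simp add: field_simps)
    finally show ?thesis using psdD[OF B] by simp
  qed
  moreover have "B' \<in> carrier_mat d d" unfolding B'_def by simp
  ultimately show ?thesis by (simp add: psd_iff)
qed

lemma chol_aux:
  "psd d B \<Longrightarrow> k \<le> d \<Longrightarrow> (\<forall>i<d. \<forall>j<d. (i<k \<or> j<k) \<longrightarrow> B$$(i,j) = 0) \<Longrightarrow>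
   \<exists>(n::nat) (r :: nat \<Rightarrow> real) w. (\<forall>t. r t \<ge> 0) \<and>
     (\<forall>i<d. \<forall>j<d. B$$(i,j) = (\<Sum>t<n. of_real (r t) * w t i * cnj (w t j)))"
proof (induction "d - k" arbitrary: k B)
  case 0
  hence "\<forall>i<d. \<forall>j<d. B$$(i,j) = 0" by auto
  thus ?case by (intro exI[of _ 0]) auto
next
  case (Suc m)
  hence k: "k < d" by auto
  show ?case
  proof (cases "B $$ (k,k) = 0")
    case True
    have z: "\<forall>i<d. \<forall>j<d. (i<Suc k \<or> j<Suc k) \<longrightarrow> B$$(i,j) = 0"
    proof (intro allI impI)
      fix i j assume ij: "i < d" "j < d" "i < Suc k \<or> j < Suc k"
      show "B$$(i,j) = 0"
      proof (cases "i = k")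
        case True thus ?thesis using psd_row_zero[OF Suc(3) k ij(2)] \<open>B $$ (k,k) = 0\<close> by simp
      next
        case ik: False
        show ?thesis
        proof (cases "j = k")
          case True
          have "B$$(j,i) = 0" using psd_row_zero[OF Suc(3) k ij(1)] \<open>B $$ (k,k) = 0\<close> True by simp
          thus ?thesis using psd_herm[OF Suc(3) ij(2,1)] by simp
        next
          case False thus ?thesis using Suc(5) ij ik by auto
        qed
      qed
    qed
    show ?thesis by (rule Suc(1)[of "Suc k"]) (use Suc k z in auto)
  next
    case False
    let ?\<beta> = "B $$ (k,k)"
    define B' where "B' = mat d d (\<lambda>(i,j). B$$(i,j) - B$$(i,k) * B$$(k,j) / ?\<beta>)"
    have psd': "psd d B'" unfolding B'_def by (rule chol_step_psd[OF Suc(3) k False])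
    have herm: "\<And>i. i < d \<Longrightarrow> B$$(k,i) = cnj (B$$(i,k))" using psd_herm[OF Suc(3) _ k] by auto
    have z: "\<forall>i<d. \<forall>j<d. (i<Suc k \<or> j<Suc k) \<longrightarrow> B'$$(i,j) = 0"
    proof (intro allI impI)
      fix i j assume ij: "i < d" "j < d" "i < Suc k \<or> j < Suc k"
      have zk: "B$$(i,k) = 0" if "i < k" "i < d" for i using Suc(5) that k by auto
      have zk': "B$$(k,i) = 0" if "i < k" "i < d" for i using Suc(5) that k by auto
      show "B'$$(i,j) = 0" unfolding B'_def using ij False Suc(5) zk zk'
        by (cases "i = k"; cases "j = k") (auto simp: less_Suc_eq)
    qed
    have mm: "m = d - Suc k" using Suc(2) by arith
    have ex: "\<exists>(n::nat) (r :: nat \<Rightarrow> real) w. (\<forall>t. r t \<ge> 0) \<and>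
     (\<forall>i<d. \<forall>j<d. B'$$(i,j) = (\<Sum>t<n. of_real (r t) * w t i * cnj (w t j)))"
      by (rule Suc(1)[OF mm psd' _ z]) (use k in simp)
    then obtain n :: nat and r w where IH: "\<forall>t. r t \<ge> 0" "\<forall>i<d. \<forall>j<d. B'$$(i,j) = (\<Sum>t<n. of_real (r t) * w t i * cnj (w t j))"
      by blast
    have \<beta>r: "?\<beta> = of_real (Re ?\<beta>)" using psd_diag(1)[OF Suc(3) k] by (simp add: complex_eq_iff)
    have \<beta>p: "Re ?\<beta> \<ge> 0" using psd_diag(2)[OF Suc(3) k] .
    define r' where "r' = r(n := 1 / Re ?\<beta>)"
    define w' where "w' = w(n := (\<lambda>i. B$$(i,k)))"
    show ?thesis
    proof (intro exI[of _ "Suc n"] exI[of _ r'] exI[of _ w'] conjI allI impI)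
      fix t show "r' t \<ge> 0" using IH(1) \<beta>p unfolding r'_def by auto
    next
      fix i j assume ij: "i < d" "j < d"
      have "(\<Sum>t<Suc n. of_real (r' t) * w' t i * cnj (w' t j)) =
         (\<Sum>t<n. of_real (r t) * w t i * cnj (w t j)) + of_real (1 / Re ?\<beta>) * B$$(i,k) * cnj (B$$(j,k))"
        unfolding r'_def w'_def by simp
      also have "\<dots> = B'$$(i,j) + B$$(i,k) * B$$(k,j) / ?\<beta>"
        using IH(2) ij herm[OF ij(2)] by (subst \<beta>r) (simp add: field_simps)
      also have "\<dots> = B$$(i,j)" unfolding B'_def using ij by simp
      finally show "B$$(i,j) = (\<Sum>t<Suc n. of_real (r' t) * w' t i * cnj (w' t j))" by simp
    qed
  qed
qed

lemma psd_decomp: assumes "psd d B"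
  shows "\<exists>(n::nat) (r :: nat \<Rightarrow> real) w. (\<forall>t. r t \<ge> 0) \<and>
     (\<forall>i<d. \<forall>j<d. B$$(i,j) = (\<Sum>t<n. of_real (r t) * w t i * cnj (w t j)))"
  using chol_aux[OF assms, of 0] by simp

lemma psd_trace_prod: assumes A: "psd d A" and B: "psd d B"
  shows "Im (\<Sum>k<d. \<Sum>m<d. A$$(k,m) * B$$(m,k)) = 0 \<and> Re (\<Sum>k<d. \<Sum>m<d. A$$(k,m) * B$$(m,k)) \<ge> 0"
proof -
  obtain n :: nat and r w where r: "\<forall>t. r t \<ge> 0" and dec: "\<forall>i<d. \<forall>j<d. B$$(i,j) = (\<Sum>t<n. of_real (r t) * w t i * cnj (w t j))"
    using psd_decomp[OF B] by blast
  have "(\<Sum>k<d. \<Sum>m<d. A$$(k,m) * B$$(m,k)) = (\<Sum>k<d. \<Sum>m<d. \<Sum>t<n. of_real (r t) * (cnj (w t k) * A$$(k,m) * w t m))"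
    using dec by (intro sum.cong refl) (simp add: sum_distrib_left algebra_simps)
  also have "\<dots> = (\<Sum>t<n. of_real (r t) * qf d A (w t))"
    unfolding qf_def sum_distrib_left by (subst sum.swap, rule sum.cong, simp, subst sum.swap, simp)
  finally have e: "(\<Sum>k<d. \<Sum>m<d. A$$(k,m) * B$$(m,k)) = (\<Sum>t<n. of_real (r t) * qf d A (w t))" .
  show ?thesis unfolding e using psdD(1,2)[OF A] r by (auto simp: Im_sum Re_sum intro!: sum_nonneg)
qed


lemma sum_split: "(\<Sum>m<a*b. (f m :: 'a::comm_monoid_add)) = (\<Sum>k<a. \<Sum>i<b. f (k*b+i :: nat))"
proof (induction a)
  case 0 then show ?case by simp
next
  case (Suc a)
  have "(\<Sum>m<Suc a*b. f m) = (\<Sum>m<a*b. f m) + (\<Sum>m\<in>{a*b..<a*b+b}. f m)"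
    by (simp add: add.commute sum.atLeastLessThan_concat[symmetric] lessThan_atLeast0
        sum.atLeastLessThan_concat)
  also have "(\<Sum>m\<in>{a*b..<a*b+b}. f m) = (\<Sum>m\<in>{0+a*b..<b+a*b}. f m)" by (simp add: add.commute)
  also have "\<dots> = (\<Sum>i\<in>{0..<b}. f (i + a*b))" by (rule sum.shift_bounds_nat_ivl)
  also have "\<dots> = (\<Sum>i<b. f (a*b+i))" by (simp add: lessThan_atLeast0 add.commute)
  finally show ?case using Suc by simp
qed

lemma dm_simps[simp]: "(i::nat) < b \<Longrightarrow> (k*b+i) div b = k" "(i::nat) < b \<Longrightarrow> (k*b+i) mod b = i"
  by auto

lemma lt_comb: "(k::nat) < a \<Longrightarrow> i < b \<Longrightarrow> k*b+i < a*b"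
proof -
  assume "k < a" "i < b"
  hence "k*b+i < k*b + b" by simp
  also have "\<dots> = Suc k * b" by simp
  also have "\<dots> \<le> a * b" using \<open>k < a\<close> by (intro mult_right_mono) auto
  finally show ?thesis .
qed

lemma tensor_idx: assumes "P \<in> carrier_mat a a" "Q \<in> carrier_mat b b" "k < a" "m < a" "i < b" "j < b"
  shows "tensor_mat P Q $$ (k*b+i, m*b+j) = P$$(k,m) * Q$$(i,j)"
  using assms lt_comb[of k a i b] lt_comb[of m a j b] by (simp add: tensor_mat_def)

lemma tensor_carrier[simp]: "P \<in> carrier_mat a a \<Longrightarrow> Q \<in> carrier_mat b b \<Longrightarrow> tensor_mat P Q \<in> carrier_mat (a*b) (a*b)"
  by (simp add: tensor_mat_def)

lemma msum_idx[simp]: "i < d \<Longrightarrow> j < d \<Longrightarrow> msum d f L $$ (i,j) = (\<Sum>l\<in>L. f l $$ (i,j))"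
  by (simp add: msum_def)

lemma msum_carrier[simp]: "msum d f L \<in> carrier_mat d d" "dim_row (msum d f L) = d" "dim_col (msum d f L) = d"
  by (auto simp: msum_def)

lemma ptrace_idx[simp]: "i < dB \<Longrightarrow> j < dB \<Longrightarrow> ptrace_A dA dB Y $$ (i,j) = (\<Sum>k<dA. Y$$(k*dB+i, k*dB+j))"
  by (simp add: ptrace_A_def)

lemma ptrace_carrier[simp]: "ptrace_A dA dB Y \<in> carrier_mat dB dB" "dim_row (ptrace_A dA dB Y) = dB" "dim_col (ptrace_A dA dB Y) = dB"
  by (auto simp: ptrace_A_def)

lemma mult_idx: "A \<in> carrier_mat n n \<Longrightarrow> B \<in> carrier_mat n n \<Longrightarrow> i < n \<Longrightarrow> j < n \<Longrightarrow>
  (A*B)$$(i,j) = (\<Sum>q<n. A$$(i,q) * B$$(q,j))"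
  by (simp add: scalar_prod_def lessThan_atLeast0)

lemma K1:
  assumes N: "N \<in> carrier_mat dA dA" and \<sigma>: "\<And>l. l \<in> L \<Longrightarrow> \<sigma> l \<in> carrier_mat dA dA"
    and Y: "\<And>l. l \<in> L \<Longrightarrow> Y l \<in> carrier_mat dB dB" and dB: "dB > 0"
  shows "ptrace_A dA dB (tensor_mat N (1\<^sub>m dB) * msum (dA*dB) (\<lambda>l. tensor_mat (\<sigma> l) (Y l)) L) =
     msum dB (\<lambda>l. (\<Sum>k<dA. \<Sum>m<dA. N$$(k,m) * \<sigma> l$$(m,k)) \<cdot>\<^sub>m Y l) L"
proof (rule eq_matI)
  fix i j assume ij: "i < dim_row (msum dB (\<lambda>l. (\<Sum>k<dA. \<Sum>m<dA. N$$(k,m) * \<sigma> l$$(m,k)) \<cdot>\<^sub>m Y l) L)"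
     "j < dim_col (msum dB (\<lambda>l. (\<Sum>k<dA. \<Sum>m<dA. N$$(k,m) * \<sigma> l$$(m,k)) \<cdot>\<^sub>m Y l) L)"
  hence i: "i < dB" and j: "j < dB" by auto
  have T: "tensor_mat N (1\<^sub>m dB) \<in> carrier_mat (dA*dB) (dA*dB)" using N by simp
  have S: "msum (dA*dB) (\<lambda>l. tensor_mat (\<sigma> l) (Y l)) L \<in> carrier_mat (dA*dB) (dA*dB)" by simp
  have "ptrace_A dA dB (tensor_mat N (1\<^sub>m dB) * msum (dA*dB) (\<lambda>l. tensor_mat (\<sigma> l) (Y l)) L) $$ (i,j)
    = (\<Sum>k<dA. \<Sum>m<dA. \<Sum>i'<dB. tensor_mat N (1\<^sub>m dB) $$ (k*dB+i, m*dB+i') *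
          msum (dA*dB) (\<lambda>l. tensor_mat (\<sigma> l) (Y l)) L $$ (m*dB+i', k*dB+j))"
    using i j lt_comb i j by (simp add: mult_idx[OF T S] sum_split)
  also have "\<dots> = (\<Sum>k<dA. \<Sum>m<dA. \<Sum>i'<dB. (N$$(k,m) * (if i = i' then 1 else 0)) *
          (\<Sum>l\<in>L. \<sigma> l $$ (m,k) * Y l $$ (i',j)))"
    using i j N \<sigma> Y lt_comb by (intro sum.cong refl) (simp add: tensor_idx[where a=dA])
  also have "\<dots> = (\<Sum>k<dA. \<Sum>m<dA. N$$(k,m) * (\<Sum>l\<in>L. \<sigma> l $$ (m,k) * Y l $$ (i,j)))"
  proof (intro sum.cong refl)
    fix k m
    have "(\<Sum>i'<dB. (N$$(k,m) * (if i = i' then 1 else 0)) * (\<Sum>l\<in>L. \<sigma> l $$ (m,k) * Y l $$ (i',j)))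
      = (\<Sum>i'<dB. if i' = i then N$$(k,m) * (\<Sum>l\<in>L. \<sigma> l $$ (m,k) * Y l $$ (i',j)) else 0)"
      by (intro sum.cong) auto
    thus "(\<Sum>i'<dB. (N$$(k,m) * (if i = i' then 1 else 0)) * (\<Sum>l\<in>L. \<sigma> l $$ (m,k) * Y l $$ (i',j)))
      = N$$(k,m) * (\<Sum>l\<in>L. \<sigma> l $$ (m,k) * Y l $$ (i,j))" using i by (simp add: sum.delta)
  qed
  also have "\<dots> = (\<Sum>l\<in>L. (\<Sum>k<dA. \<Sum>m<dA. N$$(k,m) * \<sigma> l$$(m,k)) * Y l $$ (i,j))"
    by (simp add: sum_distrib_left sum_distrib_right mult_ac sum.swap[of _ L])
  also have "\<dots> = msum dB (\<lambda>l. (\<Sum>k<dA. \<Sum>m<dA. N$$(k,m) * \<sigma> l$$(m,k)) \<cdot>\<^sub>m Y l) L $$ (i,j)"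
    unfolding msum_idx[OF i j]
  proof (intro sum.cong refl)
    fix l assume "l \<in> L" hence "Y l \<in> carrier_mat dB dB" by (rule Y)
    thus "(\<Sum>k<dA. \<Sum>m<dA. N$$(k,m) * \<sigma> l$$(m,k)) * Y l $$ (i,j) = ((\<Sum>k<dA. \<Sum>m<dA. N$$(k,m) * \<sigma> l$$(m,k)) \<cdot>\<^sub>m Y l) $$ (i,j)"
      using i j by simp
  qed
  finally show "ptrace_A dA dB (tensor_mat N (1\<^sub>m dB) * msum (dA*dB) (\<lambda>l. tensor_mat (\<sigma> l) (Y l)) L) $$ (i,j)
      = msum dB (\<lambda>l. (\<Sum>k<dA. \<Sum>m<dA. N$$(k,m) * \<sigma> l$$(m,k)) \<cdot>\<^sub>m Y l) L $$ (i,j)" .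
qed auto


lemma cp_cong: assumes "\<And>X. X \<in> carrier_mat dC dC \<Longrightarrow> F X = G X"
  shows "cp_map dC dB F = cp_map dC dB G"
proof -
  have l: "lin_map dC dB F = lin_map dC dB G"
    unfolding lin_map_def using assms by (auto simp: add_carrier_mat smult_carrier_mat)
  have "id_tensor n dC dB F M = id_tensor n dC dB G M" for n M
    unfolding id_tensor_def by (intro cong_mat refl) (auto simp: assms)
  thus ?thesis using l unfolding cp_map_def by simp
qed



lemma psd_msum:
  assumes L: "finite L" and P: "\<And>l. l \<in> L \<Longrightarrow> psd d (P l)"
    and c: "\<And>l. l \<in> L \<Longrightarrow> Im (c l) = 0 \<and> Re (c l) \<ge> 0"
  shows "psd d (msum d (\<lambda>l. c l \<cdot>\<^sub>m P l) L)"
proof -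
  have Pc: "\<And>l. l \<in> L \<Longrightarrow> P l \<in> carrier_mat d d" using P psdD(3) by blast
  have e: "qf d (msum d (\<lambda>l. c l \<cdot>\<^sub>m P l) L) v = (\<Sum>l\<in>L. c l * qf d (P l) v)" for v
  proof -
    have "qf d (msum d (\<lambda>l. c l \<cdot>\<^sub>m P l) L) v = (\<Sum>i<d. \<Sum>j<d. \<Sum>l\<in>L. c l * (cnj (v i) * P l $$ (i, j) * v j))"
      unfolding qf_def
    proof (intro sum.cong refl)
      fix i j assume "i \<in> {..<d}" "j \<in> {..<d}"
      hence ij: "i < d" "j < d" by auto
      have "(\<Sum>l\<in>L. (c l \<cdot>\<^sub>m P l) $$ (i, j)) = (\<Sum>l\<in>L. c l * P l $$ (i, j))"
      proof (intro sum.cong refl)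
        fix l assume "l \<in> L" hence "P l \<in> carrier_mat d d" by (rule Pc)
        thus "(c l \<cdot>\<^sub>m P l) $$ (i, j) = c l * P l $$ (i, j)" using ij by simp
      qed
      thus "cnj (v i) * msum d (\<lambda>l. c l \<cdot>\<^sub>m P l) L $$ (i, j) * v j = (\<Sum>l\<in>L. c l * (cnj (v i) * P l $$ (i, j) * v j))"
        using ij by (simp add: sum_distrib_left sum_distrib_right mult_ac)
    qed
    also have "\<dots> = (\<Sum>l\<in>L. c l * qf d (P l) v)"
      unfolding qf_def sum_distrib_left by (subst sum.swap, rule sum.cong, simp, subst sum.swap, simp)
    finally show ?thesis .
  qed
  have "Im (c l * qf d (P l) v) = 0 \<and> Re (c l * qf d (P l) v) \<ge> 0" if "l \<in> L" for l v
    using c[OF that] psdD(1,2)[OF P[OF that], of v] by simp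
  hence "Im (qf d (msum d (\<lambda>l. c l \<cdot>\<^sub>m P l) L) v) = 0 \<and> Re (qf d (msum d (\<lambda>l. c l \<cdot>\<^sub>m P l) L) v) \<ge> 0" for v
    unfolding e by (auto simp: Im_sum Re_sum intro!: sum_nonneg)
  thus ?thesis by (simp add: psd_iff)
qed

lemma lin_carrier: "lin_map dC dB F \<Longrightarrow> X \<in> carrier_mat dC dC \<Longrightarrow> F X \<in> carrier_mat dB dB"
  unfolding lin_map_def by auto
lemma lin_add: "lin_map dC dB F \<Longrightarrow> X \<in> carrier_mat dC dC \<Longrightarrow> Y \<in> carrier_mat dC dC \<Longrightarrow> F (X + Y) = F X + F Y"
  unfolding lin_map_def by auto
lemma lin_smult: "lin_map dC dB F \<Longrightarrow> X \<in> carrier_mat dC dC \<Longrightarrow> F (a \<cdot>\<^sub>m X) = a \<cdot>\<^sub>m F X"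
  unfolding lin_map_def by auto

lemma cp_msum_scale:
  assumes L: "finite L" and F: "\<And>l. l \<in> L \<Longrightarrow> cp_map dC dB (F l)"
    and c: "\<And>l. l \<in> L \<Longrightarrow> Im (c l) = 0 \<and> Re (c l) \<ge> 0"
  shows "cp_map dC dB (\<lambda>X. msum dB (\<lambda>l. c l \<cdot>\<^sub>m F l X) L)"
proof -
  have lin: "\<And>l. l \<in> L \<Longrightarrow> lin_map dC dB (F l)" using F unfolding cp_map_def by auto
  have Fc: "\<And>l X. l \<in> L \<Longrightarrow> X \<in> carrier_mat dC dC \<Longrightarrow> F l X \<in> carrier_mat dB dB"
    using lin lin_carrier by blast
  have "lin_map dC dB (\<lambda>X. msum dB (\<lambda>l. c l \<cdot>\<^sub>m F l X) L)"
    unfolding lin_map_def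
  proof (intro conjI ballI allI)
    fix X Y :: "complex mat" assume X: "X \<in> carrier_mat dC dC" and Y: "Y \<in> carrier_mat dC dC"
    show "msum dB (\<lambda>l. c l \<cdot>\<^sub>m F l (X + Y)) L = msum dB (\<lambda>l. c l \<cdot>\<^sub>m F l X) L + msum dB (\<lambda>l. c l \<cdot>\<^sub>m F l Y) L"
    proof (rule eq_matI)
      fix i j assume "i < dim_row (msum dB (\<lambda>l. c l \<cdot>\<^sub>m F l X) L + msum dB (\<lambda>l. c l \<cdot>\<^sub>m F l Y) L)"
        "j < dim_col (msum dB (\<lambda>l. c l \<cdot>\<^sub>m F l X) L + msum dB (\<lambda>l. c l \<cdot>\<^sub>m F l Y) L)"
      hence ij: "i < dB" "j < dB" by auto
      have "(\<Sum>l\<in>L. (c l \<cdot>\<^sub>m F l (X + Y)) $$ (i, j)) = (\<Sum>l\<in>L. (c l \<cdot>\<^sub>m F l X) $$ (i, j) + (c l \<cdot>\<^sub>m F l Y) $$ (i, j))"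
      proof (intro sum.cong refl)
        fix l assume l: "l \<in> L"
        show "(c l \<cdot>\<^sub>m F l (X + Y)) $$ (i, j) = (c l \<cdot>\<^sub>m F l X) $$ (i, j) + (c l \<cdot>\<^sub>m F l Y) $$ (i, j)"
          using lin_add[OF lin[OF l] X Y] Fc[OF l X] Fc[OF l Y] ij by (simp add: algebra_simps)
      qed
      thus "msum dB (\<lambda>l. c l \<cdot>\<^sub>m F l (X + Y)) L $$ (i, j) = (msum dB (\<lambda>l. c l \<cdot>\<^sub>m F l X) L + msum dB (\<lambda>l. c l \<cdot>\<^sub>m F l Y) L) $$ (i, j)"
        using ij by (simp add: sum.distrib)
    qed auto
  next
    fix a and X :: "complex mat" assume X: "X \<in> carrier_mat dC dC"
    show "msum dB (\<lambda>l. c l \<cdot>\<^sub>m F l (a \<cdot>\<^sub>m X)) L = a \<cdot>\<^sub>m msum dB (\<lambda>l. c l \<cdot>\<^sub>m F l X) L"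
    proof (rule eq_matI)
      fix i j assume "i < dim_row (a \<cdot>\<^sub>m msum dB (\<lambda>l. c l \<cdot>\<^sub>m F l X) L)"
        "j < dim_col (a \<cdot>\<^sub>m msum dB (\<lambda>l. c l \<cdot>\<^sub>m F l X) L)"
      hence ij: "i < dB" "j < dB" by auto
      have "(\<Sum>l\<in>L. (c l \<cdot>\<^sub>m F l (a \<cdot>\<^sub>m X)) $$ (i, j)) = (\<Sum>l\<in>L. a * (c l \<cdot>\<^sub>m F l X) $$ (i, j))"
      proof (intro sum.cong refl)
        fix l assume l: "l \<in> L"
        show "(c l \<cdot>\<^sub>m F l (a \<cdot>\<^sub>m X)) $$ (i, j) = a * (c l \<cdot>\<^sub>m F l X) $$ (i, j)"
          using lin_smult[OF lin[OF l] X] Fc[OF l X] ij by (simp add: algebra_simps)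
      qed
      thus "msum dB (\<lambda>l. c l \<cdot>\<^sub>m F l (a \<cdot>\<^sub>m X)) L $$ (i, j) = (a \<cdot>\<^sub>m msum dB (\<lambda>l. c l \<cdot>\<^sub>m F l X) L) $$ (i, j)"
        using ij by (simp add: sum_distrib_left)
    qed auto
  qed (auto)
  moreover have "psd (n * dB) (id_tensor n dC dB (\<lambda>X. msum dB (\<lambda>l. c l \<cdot>\<^sub>m F l X) L) M)"
    if M: "psd (n * dC) M" for n M
  proof -
    have e: "id_tensor n dC dB (\<lambda>X. msum dB (\<lambda>l. c l \<cdot>\<^sub>m F l X) L) M =
       msum (n*dB) (\<lambda>l. c l \<cdot>\<^sub>m id_tensor n dC dB (F l) M) L"
    proof (rule eq_matI)
      fix i j assume "i < dim_row (msum (n*dB) (\<lambda>l. c l \<cdot>\<^sub>m id_tensor n dC dB (F l) M) L)"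
         "j < dim_col (msum (n*dB) (\<lambda>l. c l \<cdot>\<^sub>m id_tensor n dC dB (F l) M) L)"
      hence ij: "i < n*dB" "j < n*dB" by auto
      hence dB: "dB > 0" by (cases dB) auto
      let ?blk = "mat dC dC (\<lambda>(p, q). M $$ ((i div dB) * dC + p, (j div dB) * dC + q))"
      have blk: "?blk \<in> carrier_mat dC dC" by simp
      have "(\<Sum>l\<in>L. (c l \<cdot>\<^sub>m F l ?blk) $$ (i mod dB, j mod dB)) = (\<Sum>l\<in>L. (c l \<cdot>\<^sub>m id_tensor n dC dB (F l) M) $$ (i, j))"
      proof (intro sum.cong refl)
        fix l assume l: "l \<in> L"
        show "(c l \<cdot>\<^sub>m F l ?blk) $$ (i mod dB, j mod dB) = (c l \<cdot>\<^sub>m id_tensor n dC dB (F l) M) $$ (i, j)"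
          using Fc[OF l blk] ij dB by (simp add: id_tensor_def)
      qed
      thus "id_tensor n dC dB (\<lambda>X. msum dB (\<lambda>l. c l \<cdot>\<^sub>m F l X) L) M $$ (i, j) =
         msum (n*dB) (\<lambda>l. c l \<cdot>\<^sub>m id_tensor n dC dB (F l) M) L $$ (i, j)"
        using ij dB by (simp add: id_tensor_def)
    qed (auto simp: id_tensor_def)
    show ?thesis unfolding e
      by (rule psd_msum[OF L _ c]) (use F M in \<open>auto simp: cp_map_def\<close>)
  qed
  ultimately show ?thesis unfolding cp_map_def by auto
qed


lemma msum_smult_idx: "(\<And>l. l \<in> L \<Longrightarrow> Y l \<in> carrier_mat d d) \<Longrightarrow> i < d \<Longrightarrow> j < d \<Longrightarrow>
  msum d (\<lambda>l. c l \<cdot>\<^sub>m Y l) L $$ (i,j) = (\<Sum>l\<in>L. c l * Y l $$ (i,j))"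
proof -
  assume Y: "\<And>l. l \<in> L \<Longrightarrow> Y l \<in> carrier_mat d d" and ij: "i < d" "j < d"
  show ?thesis unfolding msum_idx[OF ij]
  proof (intro sum.cong refl)
    fix l assume "l \<in> L" hence "Y l \<in> carrier_mat d d" by (rule Y)
    thus "(c l \<cdot>\<^sub>m Y l) $$ (i, j) = c l * Y l $$ (i, j)" using ij by simp
  qed
qed

lemma msum_cong: "(\<And>l. l \<in> L \<Longrightarrow> f l = g l) \<Longrightarrow> msum d f L = msum d g L"
  unfolding msum_def by (intro cong_mat refl sum.cong) auto

lemma tensor_one: assumes "b > 0" shows "tensor_mat (1\<^sub>m a) (1\<^sub>m b) = 1\<^sub>m (a*b)"
proof (rule eq_matI)
  fix i j assume "i < dim_row (1\<^sub>m (a*b))" "j < dim_col (1\<^sub>m (a*b))"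
  hence ij: "i < a*b" "j < a*b" by auto
  have d: "i div b < a" "j div b < a" using ij by (auto simp: less_mult_imp_div_less)
  have m: "i mod b < b" "j mod b < b" using assms by auto
  have "(i div b = j div b \<and> i mod b = j mod b) \<longleftrightarrow> i = j" by (metis div_mult_mod_eq)
  thus "tensor_mat (1\<^sub>m a) (1\<^sub>m b) $$ (i, j) = 1\<^sub>m (a*b) $$ (i, j)"
    using ij d m by (auto simp: tensor_mat_def)
qed (auto simp: tensor_mat_def)

lemma part1:
  assumes dB: "dB > 0" and dA: "dA > 0" and inc: "incoherent_extension dA dB dC Ext \<Lambda>"
    and meas: "meas_assemblage dA Out Ins M"
  shows "channel_assemblage dC dB \<Lambda> Out Ins (induced dA dB Ext M) \<and> unsteerable dC dB Out Ins (induced dA dB Ext M)"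
proof -
  obtain L :: "nat set" and \<Phi>s \<sigma> where inst: "instrument dC dB L \<Phi>s" and dens: "\<forall>l\<in>L. density dA (\<sigma> l)"
    and ext: "\<forall>X \<in> carrier_mat dC dC. Ext X = msum (dA * dB) (\<lambda>l. tensor_mat (\<sigma> l) (\<Phi>s l X)) L"
    using inc unfolding incoherent_extension_def by blast
  have ptr: "\<forall>X \<in> carrier_mat dC dC. ptrace_A dA dB (Ext X) = \<Lambda> X"
    using inc unfolding incoherent_extension_def channel_extension_def by blast
  have finL: "finite L" and cpP: "\<And>l. l \<in> L \<Longrightarrow> cp_map dC dB (\<Phi>s l)" using inst unfolding instrument_def by auto
  have Pc: "\<And>l X. l \<in> L \<Longrightarrow> X \<in> carrier_mat dC dC \<Longrightarrow> \<Phi>s l X \<in> carrier_mat dB dB"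
    using cpP lin_carrier unfolding cp_map_def by blast
  have \<sigma>psd: "\<And>l. l \<in> L \<Longrightarrow> psd dA (\<sigma> l)" and \<sigma>tr: "\<And>l. l \<in> L \<Longrightarrow> mtrace (\<sigma> l) = 1"
    using dens unfolding density_def by auto
  have \<sigma>c: "\<And>l. l \<in> L \<Longrightarrow> \<sigma> l \<in> carrier_mat dA dA" using \<sigma>psd psdD(3) by blast
  have finO: "finite Out" and Mpsd: "\<And>a x. x \<in> Ins \<Longrightarrow> a \<in> Out \<Longrightarrow> psd dA (M a x)"
    and Msum: "\<And>x. x \<in> Ins \<Longrightarrow> msum dA (\<lambda>a. M a x) Out = 1\<^sub>m dA"
    using meas unfolding meas_assemblage_def by auto
  define c where "c a x l = (\<Sum>k<dA. \<Sum>m<dA. M a x $$ (k,m) * \<sigma> l $$ (m,k))" for a x l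
  have ind: "induced dA dB Ext M a x X = msum dB (\<lambda>l. c a x l \<cdot>\<^sub>m \<Phi>s l X) L"
    if "x \<in> Ins" "a \<in> Out" "X \<in> carrier_mat dC dC" for a x X
    unfolding induced_def c_def using ext that
    by (simp add: K1[OF psdD(3)[OF Mpsd[OF that(1,2)]] \<sigma>c Pc dB])
  have cpos: "Im (c a x l) = 0 \<and> Re (c a x l) \<ge> 0" if "x \<in> Ins" "a \<in> Out" "l \<in> L" for a x l
    unfolding c_def by (rule psd_trace_prod[OF Mpsd[OF that(1,2)] \<sigma>psd[OF that(3)]])
  have trs: "(\<Sum>k<dA. \<Sum>m<dA. (if k = m then 1 else 0) * \<sigma> l $$ (m,k)) = 1" if "l \<in> L" for l
  proof -
    have "(\<Sum>k<dA. \<Sum>m<dA. (if k = m then 1 else 0) * \<sigma> l $$ (m,k)) = (\<Sum>k<dA. \<sigma> l $$ (k,k))"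
    proof (intro sum.cong refl)
      fix k assume k: "k \<in> {..<dA}"
      have "(\<Sum>m<dA. (if k = m then 1 else 0) * \<sigma> l $$ (m,k)) = (\<Sum>m<dA. if m = k then \<sigma> l $$ (m,k) else 0)"
        by (intro sum.cong) auto
      thus "(\<Sum>m<dA. (if k = m then 1 else 0) * \<sigma> l $$ (m,k)) = \<sigma> l $$ (k,k)" using k by (simp add: sum.delta)
    qed
    also have "\<dots> = 1" using \<sigma>tr[OF that] \<sigma>c[OF that] unfolding mtrace_def by simp
    finally show ?thesis .
  qed
  have csum: "(\<Sum>a\<in>Out. c a x l) = 1" if "x \<in> Ins" "l \<in> L" for x l
  proof -
    have "(\<Sum>a\<in>Out. c a x l) = (\<Sum>k<dA. \<Sum>m<dA. (\<Sum>a\<in>Out. M a x $$ (k,m)) * \<sigma> l $$ (m,k))"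
      unfolding c_def by (simp add: sum_distrib_right sum.swap[of _ Out])
    also have "\<dots> = (\<Sum>k<dA. \<Sum>m<dA. (if k = m then 1 else 0) * \<sigma> l $$ (m,k))"
    proof (intro sum.cong refl)
      fix k m assume "k \<in> {..<dA}" "m \<in> {..<dA}"
      hence km: "k < dA" "m < dA" by auto
      have "(\<Sum>a\<in>Out. M a x $$ (k,m)) = msum dA (\<lambda>a. M a x) Out $$ (k,m)" using km by simp
      also have "\<dots> = (if k = m then 1 else 0)" using Msum[OF that(1)] km by simp
      finally show "(\<Sum>a\<in>Out. M a x $$ (k,m)) * \<sigma> l $$ (m,k) = (if k = m then 1 else 0) * \<sigma> l $$ (m,k)" by simp
    qed
    also have "\<dots> = 1" by (rule trs[OF that(2)])
    finally show ?thesis .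
  qed
  have lam: "\<Lambda> X = msum dB (\<lambda>l. \<Phi>s l X) L" if X: "X \<in> carrier_mat dC dC" for X
  proof -
    have Ec: "Ext X \<in> carrier_mat (dA*dB) (dA*dB)" using ext X by simp
    have "\<Lambda> X = ptrace_A dA dB (tensor_mat (1\<^sub>m dA) (1\<^sub>m dB) * Ext X)"
      using ptr X Ec by (simp add: tensor_one[OF dB])
    also have "\<dots> = msum dB (\<lambda>l. (\<Sum>k<dA. \<Sum>m<dA. 1\<^sub>m dA $$ (k,m) * \<sigma> l $$ (m,k)) \<cdot>\<^sub>m \<Phi>s l X) L"
      using ext X by (simp add: K1[OF one_carrier_mat \<sigma>c Pc dB])
    also have "\<dots> = msum dB (\<lambda>l. \<Phi>s l X) L"
    proof (rule eq_matI)
      fix i j assume "i < dim_row (msum dB (\<lambda>l. \<Phi>s l X) L)" "j < dim_col (msum dB (\<lambda>l. \<Phi>s l X) L)"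
      hence ij: "i < dB" "j < dB" by auto
      have "(\<Sum>l\<in>L. (\<Sum>k<dA. \<Sum>m<dA. 1\<^sub>m dA $$ (k,m) * \<sigma> l $$ (m,k)) * \<Phi>s l X $$ (i,j)) = (\<Sum>l\<in>L. \<Phi>s l X $$ (i,j))"
      proof (intro sum.cong refl)
        fix l assume l: "l \<in> L"
        have "(\<Sum>k<dA. \<Sum>m<dA. 1\<^sub>m dA $$ (k,m) * \<sigma> l $$ (m,k)) = (\<Sum>k<dA. \<Sum>m<dA. (if k = m then 1 else 0) * \<sigma> l $$ (m,k))"
          by (intro sum.cong refl) auto
        thus "(\<Sum>k<dA. \<Sum>m<dA. 1\<^sub>m dA $$ (k,m) * \<sigma> l $$ (m,k)) * \<Phi>s l X $$ (i,j) = \<Phi>s l X $$ (i,j)"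
          using trs[OF l] by simp
      qed
      thus "msum dB (\<lambda>l. (\<Sum>k<dA. \<Sum>m<dA. 1\<^sub>m dA $$ (k,m) * \<sigma> l $$ (m,k)) \<cdot>\<^sub>m \<Phi>s l X) L $$ (i,j) = msum dB (\<lambda>l. \<Phi>s l X) L $$ (i,j)"
        using msum_smult_idx[OF Pc[OF _ X] ij, where c="\<lambda>l. (\<Sum>k<dA. \<Sum>m<dA. 1\<^sub>m dA $$ (k,m) * \<sigma> l $$ (m,k))"] ij by simp
    qed auto
    finally show ?thesis .
  qed
  have ca: "channel_assemblage dC dB \<Lambda> Out Ins (induced dA dB Ext M)"
    unfolding channel_assemblage_def
  proof (intro conjI finO ballI)
    fix x a assume x: "x \<in> Ins" and a: "a \<in> Out"
    have "cp_map dC dB (induced dA dB Ext M a x) = cp_map dC dB (\<lambda>X. msum dB (\<lambda>l. c a x l \<cdot>\<^sub>m \<Phi>s l X) L)"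
      by (rule cp_cong) (rule ind[OF x a])
    thus "cp_map dC dB (induced dA dB Ext M a x)"
      using cp_msum_scale[OF finL cpP cpos[OF x a]] by simp
  next
    fix x and X :: "complex mat" assume x: "x \<in> Ins" and X: "X \<in> carrier_mat dC dC"
    show "msum dB (\<lambda>a. induced dA dB Ext M a x X) Out = \<Lambda> X"
    proof (rule eq_matI)
      fix i j assume "i < dim_row (\<Lambda> X)" "j < dim_col (\<Lambda> X)"
      hence ij: "i < dB" "j < dB" using lam[OF X] by auto
      have "(\<Sum>a\<in>Out. induced dA dB Ext M a x X $$ (i,j)) = (\<Sum>a\<in>Out. \<Sum>l\<in>L. c a x l * \<Phi>s l X $$ (i,j))"
      proof (intro sum.cong refl)
        fix a assume a: "a \<in> Out"
        show "induced dA dB Ext M a x X $$ (i,j) = (\<Sum>l\<in>L. c a x l * \<Phi>s l X $$ (i,j))"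
          using ind[OF x a X] msum_smult_idx[OF Pc[OF _ X] ij, where c="c a x"] by simp
      qed
      also have "\<dots> = (\<Sum>l\<in>L. (\<Sum>a\<in>Out. c a x l) * \<Phi>s l X $$ (i,j))"
        by (simp add: sum_distrib_right sum.swap[of _ Out])
      also have "\<dots> = (\<Sum>l\<in>L. \<Phi>s l X $$ (i,j))" using csum[OF x] by simp
      finally show "msum dB (\<lambda>a. induced dA dB Ext M a x X) Out $$ (i,j) = \<Lambda> X $$ (i,j)"
        using lam[OF X] ij by simp
    qed (use lam[OF X] in auto)
  qed
  have un: "unsteerable dC dB Out Ins (induced dA dB Ext M)"
    unfolding unsteerable_def
  proof (intro exI[of _ L] exI[of _ \<Phi>s] exI[of _ "\<lambda>a x l. Re (c a x l)"] conjI)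
    show "instrument dC dB L \<Phi>s" by (rule inst)
    have "(\<Sum>a\<in>Out. Re (c a x l)) = 1" if x: "x \<in> Ins" and l: "l \<in> L" for x l
    proof -
      have "(\<Sum>a\<in>Out. Re (c a x l)) = Re (\<Sum>a\<in>Out. c a x l)" by (simp add: Re_sum)
      thus ?thesis using csum[OF x l] by simp
    qed
    thus "\<forall>x\<in>Ins. \<forall>l\<in>L. (\<forall>a\<in>Out. Re (c a x l) \<ge> 0) \<and> (\<Sum>a\<in>Out. Re (c a x l)) = 1"
      using cpos by auto
  next
    show "\<forall>a\<in>Out. \<forall>x\<in>Ins. \<forall>X\<in>carrier_mat dC dC. induced dA dB Ext M a x X = msum dB (\<lambda>l. complex_of_real (Re (c a x l)) \<cdot>\<^sub>m \<Phi>s l X) L"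
    proof (intro ballI)
    fix a x and X :: "complex mat" assume a: "a \<in> Out" and x: "x \<in> Ins" and X: "X \<in> carrier_mat dC dC"
    have "msum dB (\<lambda>l. complex_of_real (Re (c a x l)) \<cdot>\<^sub>m \<Phi>s l X) L = msum dB (\<lambda>l. c a x l \<cdot>\<^sub>m \<Phi>s l X) L"
    proof (rule msum_cong)
      fix l assume "l \<in> L"
      hence "complex_of_real (Re (c a x l)) = c a x l" using cpos[OF x a] by (simp add: complex_eq_iff)
      thus "complex_of_real (Re (c a x l)) \<cdot>\<^sub>m \<Phi>s l X = c a x l \<cdot>\<^sub>m \<Phi>s l X" by simp
    qed
    thus "induced dA dB Ext M a x X = msum dB (\<lambda>l. complex_of_real (Re (c a x l)) \<cdot>\<^sub>m \<Phi>s l X) L"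
      using ind[OF x a X] by simp
    qed
  qed
  show ?thesis using ca un by blast
qed


definition dg :: "nat \<Rightarrow> (nat \<Rightarrow> real) \<Rightarrow> complex mat" where
  "dg d q = mat d d (\<lambda>(i,j). if i = j then complex_of_real (q i) else 0)"

definition Em :: "nat \<Rightarrow> nat \<Rightarrow> complex mat" where
  "Em d l = dg d (\<lambda>i. if i = l then 1 else 0)"

lemma sum_if_const: "(\<Sum>x\<in>A. if P then f x else 0) = (if P then sum f A else 0)"
  by auto

lemma qf_tensorE:
  assumes l: "l < dA" and dB: "dB > 0" and \<Phi>: "\<And>X. X \<in> carrier_mat dC dC \<Longrightarrow> \<Phi> X \<in> carrier_mat dB dB"
  shows "qf (n*(dA*dB)) (id_tensor n dC (dA*dB) (\<lambda>X. tensor_mat (Em dA l) (\<Phi> X)) M) v =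
         qf (n*dB) (id_tensor n dC dB \<Phi> M) (\<lambda>t. v ((t div dB)*(dA*dB) + (l*dB + t mod dB)))"
proof -
  let ?D = "dA*dB"
  define blk where "blk q q' = mat dC dC (\<lambda>(p, p'). M $$ (q * dC + p, q' * dC + p'))" for q q'
  have blkc: "\<Phi> (blk q q') \<in> carrier_mat dB dB" for q q' using \<Phi> unfolding blk_def by simp
  have Ec: "Em dA l \<in> carrier_mat dA dA" by (simp add: Em_def dg_def)
  have "qf (n*?D) (id_tensor n dC ?D (\<lambda>X. tensor_mat (Em dA l) (\<Phi> X)) M) v =
     (\<Sum>q<n. \<Sum>a<dA. \<Sum>b<dB. \<Sum>q'<n. \<Sum>a'<dA. \<Sum>b'<dB.
        cnj (v (q*?D + (a*dB+b))) * (id_tensor n dC ?D (\<lambda>X. tensor_mat (Em dA l) (\<Phi> X)) M $$ (q*?D + (a*dB+b), q'*?D + (a'*dB+b')))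
        * v (q'*?D + (a'*dB+b')))"
    unfolding qf_def by (simp only: sum_split)
  also have "\<dots> = (\<Sum>q<n. \<Sum>a<dA. \<Sum>b<dB. \<Sum>q'<n. \<Sum>a'<dA. \<Sum>b'<dB.
        if a = l then (if a' = l then cnj (v (q*?D + (l*dB+b))) * (\<Phi> (blk q q') $$ (b,b')) * v (q'*?D + (l*dB+b')) else 0) else 0)"
  proof (intro sum.cong refl)
    fix q a b q' a' b' assume "q \<in> {..<n}" "a \<in> {..<dA}" "b \<in> {..<dB}" "q' \<in> {..<n}" "a' \<in> {..<dA}" "b' \<in> {..<dB}"
    hence idx: "q < n" "a < dA" "b < dB" "q' < n" "a' < dA" "b' < dB" by auto
    have r1: "a*dB+b < ?D" "a'*dB+b' < ?D" using idx lt_comb by auto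
    have r2: "q*?D + (a*dB+b) < n*?D" "q'*?D + (a'*dB+b') < n*?D" using idx r1 lt_comb by auto
    have "id_tensor n dC ?D (\<lambda>X. tensor_mat (Em dA l) (\<Phi> X)) M $$ (q*?D + (a*dB+b), q'*?D + (a'*dB+b'))
       = tensor_mat (Em dA l) (\<Phi> (blk q q')) $$ (a*dB+b, a'*dB+b')"
      using r1 r2 unfolding id_tensor_def blk_def by simp
    also have "\<dots> = Em dA l $$ (a,a') * \<Phi> (blk q q') $$ (b,b')"
      by (rule tensor_idx[OF Ec blkc]) (use idx in auto)
    finally show "cnj (v (q*?D + (a*dB+b))) * (id_tensor n dC ?D (\<lambda>X. tensor_mat (Em dA l) (\<Phi> X)) M $$ (q*?D + (a*dB+b), q'*?D + (a'*dB+b')))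
        * v (q'*?D + (a'*dB+b')) = (if a = l then (if a' = l then cnj (v (q*?D + (l*dB+b))) * (\<Phi> (blk q q') $$ (b,b')) * v (q'*?D + (l*dB+b')) else 0) else 0)"
      using idx by (simp add: Em_def dg_def)
  qed
  also have "\<dots> = (\<Sum>q<n. \<Sum>b<dB. \<Sum>q'<n. \<Sum>b'<dB.
        cnj (v (q*?D + (l*dB+b))) * (\<Phi> (blk q q') $$ (b,b')) * v (q'*?D + (l*dB+b')))"
    using l by (simp add: sum_if_const sum.delta)
  also have "\<dots> = qf (n*dB) (id_tensor n dC dB \<Phi> M) (\<lambda>t. v ((t div dB)*(dA*dB) + (l*dB + t mod dB)))"
    unfolding qf_def
  proof (simp only: sum_split, intro sum.cong refl)
    fix q b q' b' assume "q \<in> {..<n}" "b \<in> {..<dB}" "q' \<in> {..<n}" "b' \<in> {..<dB}"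
    hence idx: "q < n" "b < dB" "q' < n" "b' < dB" by auto
    have r: "q*dB+b < n*dB" "q'*dB+b' < n*dB" using idx lt_comb by auto
    show "cnj (v (q*?D + (l*dB+b))) * (\<Phi> (blk q q') $$ (b,b')) * v (q'*?D + (l*dB+b')) =
      cnj (v ((q*dB+b) div dB * ?D + (l*dB + (q*dB+b) mod dB))) * id_tensor n dC dB \<Phi> M $$ (q*dB+b, q'*dB+b') *
      v ((q'*dB+b') div dB * ?D + (l*dB + (q'*dB+b') mod dB))"
      using idx r unfolding id_tensor_def blk_def by simp
  qed
  finally show ?thesis .
qed


lemma dg_carrier[simp]: "dg d q \<in> carrier_mat d d" "Em d l \<in> carrier_mat d d"
  by (auto simp: dg_def Em_def)

lemma dg_idx[simp]: "i < d \<Longrightarrow> j < d \<Longrightarrow> dg d q $$ (i,j) = (if i = j then complex_of_real (q i) else 0)"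
  by (simp add: dg_def)

lemma one_dg: "1\<^sub>m d = dg d (\<lambda>_. 1)"
  by (rule eq_matI) (auto simp: dg_def)

lemma dg_dims[simp]: "dim_row (dg d q) = d" "dim_col (dg d q) = d" "dim_row (Em d l) = d" "dim_col (Em d l) = d"
  by (auto simp: dg_def Em_def)

lemma tensor_dims[simp]: "dim_row (tensor_mat P Q) = dim_row P * dim_row Q" "dim_col (tensor_mat P Q) = dim_col P * dim_col Q"
  by (auto simp: tensor_mat_def)

lemma smult1: "(1::complex) \<cdot>\<^sub>m A = A"
  by (rule eq_matI) auto

lemma dg_trace_E: assumes "l < d" shows "(\<Sum>k<d. \<Sum>m<d. dg d q $$ (k,m) * Em d l $$ (m,k)) = complex_of_real (q l)"
proof -
  have "(\<Sum>k<d. \<Sum>m<d. dg d q $$ (k,m) * Em d l $$ (m,k)) = (\<Sum>k<d. if k = l then complex_of_real (q k) else 0)"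
  proof (intro sum.cong refl)
    fix k assume k: "k \<in> {..<d}"
    have "(\<Sum>m<d. dg d q $$ (k,m) * Em d l $$ (m,k)) = (\<Sum>m<d. if m = k then (if k = l then complex_of_real (q k) else 0) else 0)"
      using k by (intro sum.cong refl) (auto simp: Em_def)
    thus "(\<Sum>m<d. dg d q $$ (k,m) * Em d l $$ (m,k)) = (if k = l then complex_of_real (q k) else 0)"
      using k by (simp add: sum.delta)
  qed
  thus ?thesis using assms by (simp add: sum.delta)
qed

lemma psd_dg: assumes "\<And>i. i < d \<Longrightarrow> q i \<ge> 0" shows "psd d (dg d q)"
proof -
  have "qf d (dg d q) v = (\<Sum>i<d. complex_of_real (q i * (cmod (v i))^2))" for v
    unfolding qf_def
  proof (intro sum.cong refl)
    fix i assume i: "i \<in> {..<d}"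
    have "(\<Sum>j<d. cnj (v i) * dg d q $$ (i, j) * v j) = (\<Sum>j<d. if j = i then cnj (v i) * complex_of_real (q i) * v i else 0)"
      using i by (intro sum.cong refl) auto
    also have "\<dots> = complex_of_real (q i) * (v i * cnj (v i))" using i by (simp add: sum.delta mult_ac)
    also have "\<dots> = complex_of_real (q i * (cmod (v i))^2)" by (simp only: of_real_mult complex_norm_square)
    finally show "(\<Sum>j<d. cnj (v i) * dg d q $$ (i, j) * v j) = complex_of_real (q i * (cmod (v i))^2)" .
  qed
  hence "Im (qf d (dg d q) v) = 0 \<and> Re (qf d (dg d q) v) \<ge> 0" for v
    using assms by (auto simp: Im_sum Re_sum intro!: sum_nonneg)
  thus ?thesis by (simp add: psd_iff)
qed

lemma density_Em: assumes "l < d" shows "density d (Em d l)"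
proof -
  have "psd d (Em d l)" unfolding Em_def by (rule psd_dg) auto
  moreover have "mtrace (Em d l) = (\<Sum>i<d. if i = l then 1 else 0)"
    unfolding mtrace_def by (intro sum.cong refl) (auto simp: Em_def)
  ultimately show ?thesis using assms unfolding density_def by (simp add: sum.delta)
qed

lemma tensor_add_right: assumes "A \<in> carrier_mat b b" "B \<in> carrier_mat b b" "b > 0"
  shows "tensor_mat P (A + B) = tensor_mat P A + tensor_mat P B"
  by (rule eq_matI) (use assms in \<open>auto simp: tensor_mat_def algebra_simps less_mult_imp_div_less\<close>)

lemma tensor_smult_right: assumes "A \<in> carrier_mat b b" "b > 0"
  shows "tensor_mat P (c \<cdot>\<^sub>m A) = c \<cdot>\<^sub>m tensor_mat P A"
  by (rule eq_matI) (use assms in \<open>auto simp: tensor_mat_def algebra_simps less_mult_imp_div_less\<close>)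

lemma cp_tensorE: assumes cp: "cp_map dC dB \<Phi>" and l: "l < dA" and dB: "dB > 0"
  shows "cp_map dC (dA*dB) (\<lambda>X. tensor_mat (Em dA l) (\<Phi> X))"
proof -
  have lin: "lin_map dC dB \<Phi>" using cp unfolding cp_map_def by auto
  have \<Phi>c: "\<And>X. X \<in> carrier_mat dC dC \<Longrightarrow> \<Phi> X \<in> carrier_mat dB dB" using lin lin_carrier by blast
  have "lin_map dC (dA*dB) (\<lambda>X. tensor_mat (Em dA l) (\<Phi> X))"
    unfolding lin_map_def
    using \<Phi>c lin_add[OF lin] lin_smult[OF lin] tensor_add_right[OF \<Phi>c \<Phi>c dB] tensor_smult_right[OF \<Phi>c dB]
    by auto
  moreover have "psd (n * (dA*dB)) (id_tensor n dC (dA*dB) (\<lambda>X. tensor_mat (Em dA l) (\<Phi> X)) M)"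
    if M: "psd (n * dC) M" for n M
  proof -
    have P: "psd (n*dB) (id_tensor n dC dB \<Phi> M)" using cp M unfolding cp_map_def by auto
    have "Im (qf (n * (dA*dB)) (id_tensor n dC (dA*dB) (\<lambda>X. tensor_mat (Em dA l) (\<Phi> X)) M) v) = 0 \<and>
          Re (qf (n * (dA*dB)) (id_tensor n dC (dA*dB) (\<lambda>X. tensor_mat (Em dA l) (\<Phi> X)) M) v) \<ge> 0" for v
      using qf_tensorE[OF l dB \<Phi>c, where n=n and M=M and v=v] psdD(1,2)[OF P] by simp
    moreover have "id_tensor n dC (dA*dB) (\<lambda>X. tensor_mat (Em dA l) (\<Phi> X)) M \<in> carrier_mat (n * (dA*dB)) (n * (dA*dB))"
      by (simp add: id_tensor_def)
    ultimately show ?thesis by (simp add: psd_iff)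
  qed
  ultimately show ?thesis unfolding cp_map_def by auto
qed

lemma mtrace_msum: "(\<And>l. l \<in> L \<Longrightarrow> f l \<in> carrier_mat d d) \<Longrightarrow> mtrace (msum d f L) = (\<Sum>l\<in>L. mtrace (f l))"
proof -
  assume f: "\<And>l. l \<in> L \<Longrightarrow> f l \<in> carrier_mat d d"
  have "mtrace (msum d f L) = (\<Sum>l\<in>L. \<Sum>i<d. f l $$ (i,i))" unfolding mtrace_def by (simp add: sum.swap[of _ L])
  also have "\<dots> = (\<Sum>l\<in>L. mtrace (f l))" unfolding mtrace_def using f by (intro sum.cong refl) auto
  finally show ?thesis .
qed

lemma mtrace_tensorE: assumes Y: "Y \<in> carrier_mat dB dB" and l: "l < dA"
  shows "mtrace (tensor_mat (Em dA l) Y) = mtrace Y"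
proof -
  have "mtrace (tensor_mat (Em dA l) Y) = (\<Sum>k<dA. \<Sum>i<dB. tensor_mat (Em dA l) Y $$ (k*dB+i, k*dB+i))"
    unfolding mtrace_def using Y by (simp add: sum_split)
  also have "\<dots> = (\<Sum>k<dA. \<Sum>i<dB. Em dA l $$ (k,k) * Y $$ (i,i))"
    by (intro sum.cong refl) (simp add: tensor_idx[OF dg_carrier(2) Y])
  also have "\<dots> = (\<Sum>k<dA. if k = l then (\<Sum>i<dB. Y $$ (i,i)) else 0)"
    by (intro sum.cong refl) (auto simp: Em_def)
  also have "\<dots> = mtrace Y" using l Y by (simp add: sum.delta mtrace_def)
  finally show ?thesis .
qed


lemma constr:
  fixes q :: "'o \<Rightarrow> 'i \<Rightarrow> nat \<Rightarrow> real" and L :: "nat set"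
  assumes dB: "dB > 0" and inst: "instrument dC dB L \<Phi>s" and LdA: "\<forall>l\<in>L. l < dA"
    and lam: "\<forall>X\<in>carrier_mat dC dC. \<Lambda> X = msum dB (\<lambda>l. \<Phi>s l X) L"
    and finO: "finite Out" and q: "\<forall>x\<in>Ins. \<forall>k<dA. (\<forall>a\<in>Out. q a x k \<ge> 0) \<and> (\<Sum>a\<in>Out. q a x k) = 1"
  shows "incoherent_extension dA dB dC (\<lambda>X. msum (dA*dB) (\<lambda>l. tensor_mat (Em dA l) (\<Phi>s l X)) L) \<Lambda> \<and>
         meas_assemblage dA Out Ins (\<lambda>a x. dg dA (q a x)) \<and>
         (\<forall>a x X. X \<in> carrier_mat dC dC \<longrightarrow>
            induced dA dB (\<lambda>X. msum (dA*dB) (\<lambda>l. tensor_mat (Em dA l) (\<Phi>s l X)) L) (\<lambda>a x. dg dA (q a x)) a x X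
            = msum dB (\<lambda>l. complex_of_real (q a x l) \<cdot>\<^sub>m \<Phi>s l X) L)"
proof -
  define Ext where "Ext = (\<lambda>X. msum (dA*dB) (\<lambda>l. tensor_mat (Em dA l) (\<Phi>s l X)) L)"
  have finL: "finite L" and cpP: "\<And>l. l \<in> L \<Longrightarrow> cp_map dC dB (\<Phi>s l)"
    and chan: "channel dC dB (\<lambda>X. msum dB (\<lambda>l. \<Phi>s l X) L)" using inst unfolding instrument_def by auto
  have Pc: "\<And>l X. l \<in> L \<Longrightarrow> X \<in> carrier_mat dC dC \<Longrightarrow> \<Phi>s l X \<in> carrier_mat dB dB"
    using cpP lin_carrier unfolding cp_map_def by blast
  have gen: "ptrace_A dA dB (tensor_mat (dg dA r) (1\<^sub>m dB) * Ext X) = msum dB (\<lambda>l. complex_of_real (r l) \<cdot>\<^sub>m \<Phi>s l X) L"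
    if X: "X \<in> carrier_mat dC dC" for r X
  proof -
    have "ptrace_A dA dB (tensor_mat (dg dA r) (1\<^sub>m dB) * Ext X) =
        msum dB (\<lambda>l. (\<Sum>k<dA. \<Sum>m<dA. dg dA r $$ (k,m) * Em dA l $$ (m,k)) \<cdot>\<^sub>m \<Phi>s l X) L"
      unfolding Ext_def by (rule K1[OF dg_carrier(1) dg_carrier(2) Pc[OF _ X] dB])
    also have "\<dots> = msum dB (\<lambda>l. complex_of_real (r l) \<cdot>\<^sub>m \<Phi>s l X) L"
    proof (rule msum_cong)
      fix l assume "l \<in> L" hence "l < dA" using LdA by auto
      thus "(\<Sum>k<dA. \<Sum>m<dA. dg dA r $$ (k,m) * Em dA l $$ (m,k)) \<cdot>\<^sub>m \<Phi>s l X = complex_of_real (r l) \<cdot>\<^sub>m \<Phi>s l X"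
        by (simp only: dg_trace_E)
    qed
    finally show ?thesis .
  qed
  have Ec: "Ext X \<in> carrier_mat (dA*dB) (dA*dB)" for X unfolding Ext_def by simp
  have ptr: "ptrace_A dA dB (Ext X) = \<Lambda> X" if X: "X \<in> carrier_mat dC dC" for X
  proof -
    have "ptrace_A dA dB (Ext X) = ptrace_A dA dB (tensor_mat (dg dA (\<lambda>_. 1)) (1\<^sub>m dB) * Ext X)"
      using Ec[of X] by (simp add: one_dg[symmetric] tensor_one[OF dB])
    also have "\<dots> = msum dB (\<lambda>l. \<Phi>s l X) L" unfolding gen[OF X] by (simp add: smult1)
    finally show ?thesis using lam X by simp
  qed
  have cpE: "cp_map dC (dA*dB) Ext"
  proof -
    have "cp_map dC (dA*dB) Ext = cp_map dC (dA*dB) (\<lambda>X. msum (dA*dB) (\<lambda>l. 1 \<cdot>\<^sub>m tensor_mat (Em dA l) (\<Phi>s l X)) L)"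
      unfolding Ext_def smult1 ..
    also have "\<dots>" by (rule cp_msum_scale[OF finL cp_tensorE[OF cpP _ dB]]) (use LdA in auto)
    finally show ?thesis .
  qed
  have trE: "mtrace (Ext X) = mtrace X" if X: "X \<in> carrier_mat dC dC" for X
  proof -
    have "mtrace (Ext X) = (\<Sum>l\<in>L. mtrace (tensor_mat (Em dA l) (\<Phi>s l X)))"
      unfolding Ext_def by (rule mtrace_msum) (use Pc X in simp)
    also have "\<dots> = (\<Sum>l\<in>L. mtrace (\<Phi>s l X))" using LdA by (intro sum.cong refl) (simp add: mtrace_tensorE[OF Pc[OF _ X]])
    also have "\<dots> = mtrace (msum dB (\<lambda>l. \<Phi>s l X) L)" by (rule mtrace_msum[symmetric]) (use Pc X in simp)
    also have "\<dots> = mtrace X" using chan X unfolding channel_def by simp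
    finally show ?thesis .
  qed
  have ex: "\<exists>(L'::nat set) \<Phi>s' \<sigma>. instrument dC dB L' \<Phi>s' \<and> (\<forall>l\<in>L'. density dA (\<sigma> l)) \<and>
        (\<forall>X \<in> carrier_mat dC dC. Ext X = msum (dA * dB) (\<lambda>l. tensor_mat (\<sigma> l) (\<Phi>s' l X)) L')"
    by (intro exI[of _ L] exI[of _ \<Phi>s] exI[of _ "Em dA"]) (use inst LdA density_Em in \<open>auto simp: Ext_def\<close>)
  have inc: "incoherent_extension dA dB dC Ext \<Lambda>"
    unfolding incoherent_extension_def channel_extension_def channel_def
    using ex cpE trE ptr by blast
  have meas: "meas_assemblage dA Out Ins (\<lambda>a x. dg dA (q a x))"
    unfolding meas_assemblage_def
  proof (intro conjI finO ballI)
    fix x a assume x: "x \<in> Ins" and a: "a \<in> Out"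
    show "psd dA (dg dA (q a x))" by (rule psd_dg) (use q x a in auto)
  next
    fix x assume x: "x \<in> Ins"
    show "msum dA (\<lambda>a. dg dA (q a x)) Out = 1\<^sub>m dA"
    proof (rule eq_matI)
      fix i j assume "i < dim_row (1\<^sub>m dA)" "j < dim_col (1\<^sub>m dA)"
      hence ij: "i < dA" "j < dA" by auto
      have "(\<Sum>a\<in>Out. complex_of_real (q a x i)) = complex_of_real (\<Sum>a\<in>Out. q a x i)" by simp
      also have "\<dots> = 1" using q x ij by simp
      finally show "msum dA (\<lambda>a. dg dA (q a x)) Out $$ (i, j) = 1\<^sub>m dA $$ (i, j)"
        using ij by (cases "i = j") auto
    qed auto
  qed
  have ind: "\<forall>a x X. X \<in> carrier_mat dC dC \<longrightarrow> induced dA dB Ext (\<lambda>a x. dg dA (q a x)) a x X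
            = msum dB (\<lambda>l. complex_of_real (q a x l) \<cdot>\<^sub>m \<Phi>s l X) L"
    unfolding induced_def using gen by simp
  show ?thesis using inc meas ind unfolding Ext_def by blast
qed


theorem proposition1:
  fixes dB dC :: nat and \<Lambda> :: "complex mat \<Rightarrow> complex mat"
  assumes "dB > 0" and "dC > 0" and "channel dC dB \<Lambda>"
  shows "(\<forall>(dA :: nat) Ext (Out :: 'o set) (Ins :: 'i set) M.
            dA > 0 \<and> incoherent_extension dA dB dC Ext \<Lambda> \<and> meas_assemblage dA Out Ins M \<longrightarrow>
            channel_assemblage dC dB \<Lambda> Out Ins (induced dA dB Ext M) \<and>
            unsteerable dC dB Out Ins (induced dA dB Ext M))
       \<and> (\<forall>(Out :: 'o set) (Ins :: 'i set) Lam.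
            channel_assemblage dC dB \<Lambda> Out Ins Lam \<and> unsteerable dC dB Out Ins Lam \<longrightarrow>
            (\<exists>(dA :: nat) Ext M. dA > 0 \<and> incoherent_extension dA dB dC Ext \<Lambda> \<and>
               meas_assemblage dA Out Ins M \<and>
               (\<forall>a\<in>Out. \<forall>x\<in>Ins. \<forall>X \<in> carrier_mat dC dC. Lam a x X = induced dA dB Ext M a x X)))"
proof (rule conjI; intro allI impI)
  fix dA :: nat and Ext and Out :: "'o set" and Ins :: "'i set" and M
  assume "0 < dA \<and> incoherent_extension dA dB dC Ext \<Lambda> \<and> meas_assemblage dA Out Ins M"
  thus "channel_assemblage dC dB \<Lambda> Out Ins (induced dA dB Ext M) \<and> unsteerable dC dB Out Ins (induced dA dB Ext M)"
    using part1[OF assms(1)] by blast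
next
  fix Out :: "'o set" and Ins :: "'i set" and Lam
  assume h: "channel_assemblage dC dB \<Lambda> Out Ins Lam \<and> unsteerable dC dB Out Ins Lam"
  have dB: "dB > 0" by fact
  have finO: "finite Out" and caL: "\<And>x X. x \<in> Ins \<Longrightarrow> X \<in> carrier_mat dC dC \<Longrightarrow> msum dB (\<lambda>a. Lam a x X) Out = \<Lambda> X"
    using h unfolding channel_assemblage_def by auto
  have cp\<Lambda>: "cp_map dC dB \<Lambda>" and tr\<Lambda>: "\<And>X. X \<in> carrier_mat dC dC \<Longrightarrow> mtrace (\<Lambda> X) = mtrace X"
    using assms(3) unfolding channel_def by auto
  have \<Lambda>c: "\<And>X. X \<in> carrier_mat dC dC \<Longrightarrow> \<Lambda> X \<in> carrier_mat dB dB"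
    using cp\<Lambda> lin_carrier unfolding cp_map_def by blast
  show "\<exists>(dA :: nat) Ext M. dA > 0 \<and> incoherent_extension dA dB dC Ext \<Lambda> \<and>
               meas_assemblage dA Out Ins M \<and>
               (\<forall>a\<in>Out. \<forall>x\<in>Ins. \<forall>X \<in> carrier_mat dC dC. Lam a x X = induced dA dB Ext M a x X)"
  proof (cases "Ins = {}")
    case True
    have m0: "msum dB (\<lambda>l. \<Lambda> X) {0::nat} = \<Lambda> X" if X: "X \<in> carrier_mat dC dC" for X
      by (rule eq_matI) (use \<Lambda>c[OF X] in auto)
    have inst: "instrument dC dB {0::nat} (\<lambda>_. \<Lambda>)"
      unfolding instrument_def channel_def
    proof (intro conjI ballI)
      show "cp_map dC dB (\<lambda>X. msum dB (\<lambda>l. \<Lambda> X) {0::nat})" using cp_cong[of dC "\<lambda>X. msum dB (\<lambda>l. \<Lambda> X) {0::nat}" \<Lambda> dB] m0 cp\<Lambda> by simp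
      fix X :: "complex mat" assume "X \<in> carrier_mat dC dC"
      thus "mtrace (msum dB (\<lambda>l. \<Lambda> X) {0::nat}) = mtrace X" using m0 tr\<Lambda> by simp
    qed (use cp\<Lambda> in auto)
    have "\<forall>X\<in>carrier_mat dC dC. \<Lambda> X = msum dB (\<lambda>l. \<Lambda> X) {0::nat}" using m0 by simp
    from constr[OF dB inst _ this finO, of 1 Ins "\<lambda>_ _ _. 0"] True
    show ?thesis by (intro exI[of _ 1]) auto
  next
    case False
    then obtain x0 where x0: "x0 \<in> Ins" by blast
    obtain L :: "nat set" and \<Phi>s and p :: "'o \<Rightarrow> 'i \<Rightarrow> nat \<Rightarrow> real" where inst: "instrument dC dB L \<Phi>s"
      and pp: "\<forall>x\<in>Ins. \<forall>l\<in>L. (\<forall>a\<in>Out. p a x l \<ge> 0) \<and> (\<Sum>a\<in>Out. p a x l) = 1"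
      and Lp: "\<forall>a\<in>Out. \<forall>x\<in>Ins. \<forall>X \<in> carrier_mat dC dC. Lam a x X = msum dB (\<lambda>l. complex_of_real (p a x l) \<cdot>\<^sub>m \<Phi>s l X) L"
      using h unfolding unsteerable_def by blast
    have finL: "finite L" and cpP: "\<And>l. l \<in> L \<Longrightarrow> cp_map dC dB (\<Phi>s l)" using inst unfolding instrument_def by auto
    have Pc: "\<And>l X. l \<in> L \<Longrightarrow> X \<in> carrier_mat dC dC \<Longrightarrow> \<Phi>s l X \<in> carrier_mat dB dB"
      using cpP lin_carrier unfolding cp_map_def by blast
    have lamL: "\<forall>X\<in>carrier_mat dC dC. \<Lambda> X = msum dB (\<lambda>l. \<Phi>s l X) L"
    proof
      fix X :: "complex mat" assume X: "X \<in> carrier_mat dC dC"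
      show "\<Lambda> X = msum dB (\<lambda>l. \<Phi>s l X) L"
      proof (rule eq_matI)
        fix i j assume "i < dim_row (msum dB (\<lambda>l. \<Phi>s l X) L)" "j < dim_col (msum dB (\<lambda>l. \<Phi>s l X) L)"
        hence ij: "i < dB" "j < dB" by auto
        have "\<Lambda> X $$ (i,j) = (\<Sum>a\<in>Out. Lam a x0 X $$ (i,j))" using caL[OF x0 X, symmetric] ij by simp
        also have "\<dots> = (\<Sum>a\<in>Out. \<Sum>l\<in>L. complex_of_real (p a x0 l) * \<Phi>s l X $$ (i,j))"
        proof (intro sum.cong refl)
          fix a assume a: "a \<in> Out"
          show "Lam a x0 X $$ (i,j) = (\<Sum>l\<in>L. complex_of_real (p a x0 l) * \<Phi>s l X $$ (i,j))"
            using Lp a x0 X msum_smult_idx[OF Pc[OF _ X] ij, where c="\<lambda>l. complex_of_real (p a x0 l)"] by simp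
        qed
        also have "\<dots> = (\<Sum>l\<in>L. complex_of_real (\<Sum>a\<in>Out. p a x0 l) * \<Phi>s l X $$ (i,j))"
          by (simp add: sum_distrib_right sum.swap[of _ Out])
        also have "\<dots> = (\<Sum>l\<in>L. \<Phi>s l X $$ (i,j))" using pp x0 by simp
        finally show "\<Lambda> X $$ (i,j) = msum dB (\<lambda>l. \<Phi>s l X) L $$ (i,j)" using ij by simp
      qed (use \<Lambda>c[OF X] in auto)
    qed
    have Onz: "Out \<noteq> {}"
    proof
      assume O: "Out = {}"
      have one: "1\<^sub>m dC \<in> carrier_mat dC dC" by simp
      have "mtrace (\<Lambda> (1\<^sub>m dC)) = mtrace (msum dB (\<lambda>a. Lam a x0 (1\<^sub>m dC)) Out)" using caL[OF x0 one] by simp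
      also have "\<dots> = 0" unfolding O mtrace_def by simp
      finally have "mtrace (1\<^sub>m dC) = 0" using tr\<Lambda>[OF one] by simp
      moreover have "mtrace (1\<^sub>m dC) = of_nat dC" unfolding mtrace_def by simp
      ultimately show False using assms(2) by simp
    qed
    define dA where "dA = Suc (\<Sum>L)"
    have LdA: "\<forall>l\<in>L. l < dA"
    proof
      fix l assume "l \<in> L"
      hence "l \<le> (\<Sum>x\<in>L. x)" using finL by (intro member_le_sum) auto
      thus "l < dA" unfolding dA_def by simp
    qed
    define q where "q a x k = (if k \<in> L then p a x k else 1 / real (card Out))" for a x k
    have cO: "card Out > 0" using Onz finO by (simp add: card_gt_0_iff)
    have qq: "\<forall>x\<in>Ins. \<forall>k<dA. (\<forall>a\<in>Out. q a x k \<ge> 0) \<and> (\<Sum>a\<in>Out. q a x k) = 1"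
    proof (intro ballI allI impI)
      fix x k assume x: "x \<in> Ins" and k: "k < dA"
      have A: "\<forall>a\<in>Out. q a x k \<ge> 0" using pp x unfolding q_def by auto
      have B: "(\<Sum>a\<in>Out. q a x k) = 1"
      proof (cases "k \<in> L")
        case True thus ?thesis using pp x unfolding q_def by auto
      next
        case False thus ?thesis using cO unfolding q_def by simp
      qed
      show "(\<forall>a\<in>Out. q a x k \<ge> 0) \<and> (\<Sum>a\<in>Out. q a x k) = 1" using A B by blast
    qed
    from constr[OF dB inst LdA lamL finO qq]
    have c: "incoherent_extension dA dB dC (\<lambda>X. msum (dA*dB) (\<lambda>l. tensor_mat (Em dA l) (\<Phi>s l X)) L) \<Lambda>"
      "meas_assemblage dA Out Ins (\<lambda>a x. dg dA (q a x))"
      "\<And>a x X. X \<in> carrier_mat dC dC \<Longrightarrow>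
            induced dA dB (\<lambda>X. msum (dA*dB) (\<lambda>l. tensor_mat (Em dA l) (\<Phi>s l X)) L) (\<lambda>a x. dg dA (q a x)) a x X
            = msum dB (\<lambda>l. complex_of_real (q a x l) \<cdot>\<^sub>m \<Phi>s l X) L" by blast+
    have "Lam a x X = induced dA dB (\<lambda>X. msum (dA*dB) (\<lambda>l. tensor_mat (Em dA l) (\<Phi>s l X)) L) (\<lambda>a x. dg dA (q a x)) a x X"
      if a: "a \<in> Out" and x: "x \<in> Ins" and X: "X \<in> carrier_mat dC dC" for a x X
    proof -
      have "Lam a x X = msum dB (\<lambda>l. complex_of_real (p a x l) \<cdot>\<^sub>m \<Phi>s l X) L" using Lp a x X by blast
      also have "\<dots> = msum dB (\<lambda>l. complex_of_real (q a x l) \<cdot>\<^sub>m \<Phi>s l X) L"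
        by (rule msum_cong) (simp add: q_def)
      finally show ?thesis using c(3)[OF X] by simp
    qed
    thus ?thesis using c(1,2) unfolding dA_def by (intro exI[of _ "Suc (\<Sum>L)"] exI) auto
  qed
qed

end
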